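(* Let $\{F_n\}_{n\geq 0}$ be a sequence of positive integers with $F_0=1$ and $F_1=1$, let $\Pi$ be the cobweb poset it determines, and for $n\ge 0$ let $\chi_n(t)=\sum_{x\in P_n}\mu(0,x)\,t^{n-r(x)}$ be the characteristic polynomial of the finite cobweb subposet $P_n$. Then $\chi_0(t)=1$ and $\chi_n(t)=t^n-t^{n-1}$ for all $n\geq 1$.
   Context: Cobweb poset: given the sequence $\{F_n\}_{n\ge 0}$, for $s\geq 0$ let the $s$-th level be $\Phi_s=\{\langle j,s\rangle : 1\leq j\leq F_s\}$, and let $V=\bigcup_{s\geq 0}\Phi_s$. The cobweb poset is $\Pi=(V,\leq)$ where for $x=\langle s,t\rangle$, $y=\langle u,v\rangle$ one has $x\leq y$ iff ($t<v$) or ($t=v$ and $s=u$). Its rank function is $r(x)=s$ for $x\in\Phi_s$. For $n\geq 0$, $P_n$ is the set $\bigcup_{0\leq s\leq n}\Phi_s$ with the induced order; it has unique minimal element $0=\langle 1,0\rangle$. $\mu$ denotes the M\"obius function of $P_n$. *)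

theory Defs
  imports "HOL-Computational_Algebra.Polynomial"
begin

definition mobius :: "'a set \<Rightarrow> ('a \<Rightarrow> 'a \<Rightarrow> bool) \<Rightarrow> 'a \<Rightarrow> 'a \<Rightarrow> int" where
  "mobius A le = (THE m. (\<forall>x y. m x y =
      (if x \<in> A \<and> y \<in> A then
         (if x = y then 1
          else if le x y then - (\<Sum>z\<in>{z\<in>A. le x z \<and> le z y \<and> z \<noteq> y}. m x z)
          else 0)
       else 0)))"

text \<open>Cobweb poset: vertices are pairs (j, s) meaning <j,s>, with level s and 1 \<le> j \<le> F s.\<close>
definition cobweb_le :: "nat \<times> nat \<Rightarrow> nat \<times> nat \<Rightarrow> bool" where
  "cobweb_le x y = (snd x < snd y \<or> (snd x = snd y \<and> fst x = fst y))"

definition cobweb_level :: "(nat \<Rightarrow> nat) \<Rightarrow> nat \<Rightarrow> (nat \<times> nat) set" where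
  "cobweb_level F s = {(j, s) | j. 1 \<le> j \<and> j \<le> F s}"

definition cobweb_P :: "(nat \<Rightarrow> nat) \<Rightarrow> nat \<Rightarrow> (nat \<times> nat) set" where
  "cobweb_P F n = (\<Union>s\<in>{0..n}. cobweb_level F s)"

definition cobweb_rank :: "nat \<times> nat \<Rightarrow> nat" where
  "cobweb_rank x = snd x"

definition cobweb_zero :: "nat \<times> nat" where
  "cobweb_zero = (1, 0)"

definition cobweb_char_poly :: "(nat \<Rightarrow> nat) \<Rightarrow> nat \<Rightarrow> int poly" where
  "cobweb_char_poly F n =
     (\<Sum>x\<in>cobweb_P F n. monom (mobius (cobweb_P F n) cobweb_le cobweb_zero x) (n - cobweb_rank x))"

end

theory Submission
  imports Defs
begin

function mu :: "(nat\<times>nat) set \<Rightarrow> nat\<times>nat \<Rightarrow> nat\<times>nat \<Rightarrow> int" where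
  "mu A x y = (if x \<in> A \<and> y \<in> A then
         (if x = y then 1
          else if cobweb_le x y then - (\<Sum>z\<in>{z\<in>A. cobweb_le x z \<and> cobweb_le z y \<and> z \<noteq> y}. mu A x z)
          else 0)
       else 0)"
  by pat_completeness auto
termination
  by (relation "measure (\<lambda>(A,x,y). snd y)") (auto simp: cobweb_le_def prod_eq_iff)

declare mu.simps[simp del]

lemma mobius_eq: "mobius A cobweb_le = mu A"
  unfolding mobius_def
proof (rule the_equality)
  show "\<forall>x y. mu A x y = (if x \<in> A \<and> y \<in> A then
         (if x = y then 1
          else if cobweb_le x y then - (\<Sum>z\<in>{z\<in>A. cobweb_le x z \<and> cobweb_le z y \<and> z \<noteq> y}. mu A x z)
          else 0)
       else 0)" by (simp add: mu.simps[symmetric])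
next
  fix m :: "nat\<times>nat \<Rightarrow> nat\<times>nat \<Rightarrow> int" assume H: "\<forall>x y. m x y = (if x \<in> A \<and> y \<in> A then
         (if x = y then 1
          else if cobweb_le x y then - (\<Sum>z\<in>{z\<in>A. cobweb_le x z \<and> cobweb_le z y \<and> z \<noteq> y}. m x z)
          else 0)
       else 0)"
  have "\<forall>x. m x y = mu A x y" for y
  proof (induction y rule: measure_induct_rule[of snd])
    case (less y)
    show ?case
    proof
      fix x
      have "(\<Sum>z\<in>{z\<in>A. cobweb_le x z \<and> cobweb_le z y \<and> z \<noteq> y}. m x z)
          = (\<Sum>z\<in>{z\<in>A. cobweb_le x z \<and> cobweb_le z y \<and> z \<noteq> y}. mu A x z)"
        by (rule sum.cong) (auto simp: less cobweb_le_def prod_eq_iff)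
      then show "m x y = mu A x y"
        using H[rule_format, of x y] mu.simps[of A x y] by simp
    qed
  qed
  then show "m = mu A" by (auto intro!: ext)
qed

lemma mem_P: "x \<in> cobweb_P F n \<longleftrightarrow> 1 \<le> fst x \<and> fst x \<le> F (snd x) \<and> snd x \<le> n"
  by (cases x) (auto simp: cobweb_P_def cobweb_level_def)

lemma finite_P: "finite (cobweb_P F n)"
proof -
  have "cobweb_P F n \<subseteq> {0..Max (F ` {0..n})} \<times> {0..n}"
  proof
    fix x assume x: "x \<in> cobweb_P F n"
    then have "F (snd x) \<le> Max (F ` {0..n})" by (intro Max_ge) (auto simp: mem_P)
    then show "x \<in> {0..Max (F ` {0..n})} \<times> {0..n}" using x by (cases x) (auto simp: mem_P intro: order.trans)
  qed
  then show ?thesis by (rule finite_subset) auto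
qed

lemma mu_vals:
  assumes F0: "F 0 = 1" and F1: "F 1 = 1"
  shows "x \<in> cobweb_P F n \<Longrightarrow> mu (cobweb_P F n) (1,0) x =
      (if snd x = 0 then 1 else if snd x = 1 then -1 else 0)"
proof (induction x rule: measure_induct_rule[of snd])
  case (less x)
  let ?P = "cobweb_P F n"
  have z: "(1,0) \<in> ?P" using F0 by (simp add: mem_P)
  show ?case
  proof (cases "snd x = 0")
    case True
    then have "x = (1,0)" using less.prems F0 by (cases x) (auto simp: mem_P)
    then show ?thesis using z by (subst mu.simps) simp
  next
    case False
    then have le: "cobweb_le (1,0) x" "x \<noteq> (1,0)" by (auto simp: cobweb_le_def)
    define Z where "Z = {z\<in>?P. cobweb_le (1,0) z \<and> cobweb_le z x \<and> z \<noteq> x}"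
    have muX: "mu ?P (1,0) x = - (\<Sum>z\<in>Z. mu ?P (1,0) z)"
      using le z less.prems by (simp add: mu.simps[of _ _ x] Z_def)
    have IH: "(\<Sum>z\<in>Z. mu ?P (1,0) z) = (\<Sum>z\<in>Z. (if snd z = 0 then 1 else if snd z = 1 then -1 else 0))"
    proof (rule sum.cong[OF refl])
      fix z assume "z \<in> Z"
      then have "snd z < snd x" "z \<in> ?P" by (auto simp: Z_def cobweb_le_def prod_eq_iff)
      then show "mu ?P (1,0) z = (if snd z = 0 then 1 else if snd z = 1 then -1 else 0)"
        by (rule less.IH)
    qed
    have finZ: "finite Z" unfolding Z_def using finite_P by (rule finite_subset[rotated]) auto
    show ?thesis
    proof (cases "snd x = 1")
      case True
      have "Z = {(1,0)}"
        using True less.prems F0 by (auto simp: Z_def mem_P cobweb_le_def prod_eq_iff)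
      then show ?thesis using muX IH True by simp
    next
      case False2: False
      have sub: "{(1,0),(1,1)} \<subseteq> Z"
        using False False2 less.prems F0 F1 by (auto simp: Z_def mem_P cobweb_le_def)
      have "(\<Sum>z\<in>Z. (if snd z = 0 then 1 else if snd z = 1 then -1 else 0::int))
          = (\<Sum>z\<in>{(1,0),(1,1)::nat\<times>nat}. (if snd z = 0 then 1 else if snd z = 1 then -1 else 0))"
        apply (rule sum.mono_neutral_right[OF finZ sub])
        using F0 F1 by (auto simp: Z_def mem_P cobweb_le_def prod_eq_iff)
      then show ?thesis using muX IH False False2 by simp
    qed
  qed
qed

theorem mainTheorem3:
  fixes F :: "nat \<Rightarrow> nat"
  assumes "\<forall>n. F n > 0" and "F 0 = 1" and "F 1 = 1"
  shows "cobweb_char_poly F 0 = 1 \<and>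
         (\<forall>n\<ge>1. cobweb_char_poly F n = monom 1 n - monom 1 (n - 1))"
proof -
  note F0 = assms(2) and F1 = assms(3)
  have eq: "cobweb_char_poly F n = (\<Sum>x\<in>cobweb_P F n.
      monom (if snd x = 0 then 1 else if snd x = 1 then -1 else 0) (n - snd x))" for n
    unfolding cobweb_char_poly_def mobius_eq cobweb_zero_def cobweb_rank_def
    by (rule sum.cong[OF refl]) (subst mu_vals[OF F0 F1], assumption, rule refl)
  have P0: "cobweb_P F 0 = {(1,0)}" using F0 by (auto simp: mem_P prod_eq_iff)
  have A: "cobweb_char_poly F 0 = 1" unfolding eq P0 by (simp add: one_poly_def monom_0)
  have B: "cobweb_char_poly F n = monom 1 n - monom 1 (n - 1)" if n: "n \<ge> 1" for n
  proof -
    have sub: "{(1,0),(1,1)} \<subseteq> cobweb_P F n" using n F0 F1 by (auto simp: mem_P)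
    have "cobweb_char_poly F n = (\<Sum>x\<in>{(1,0),(1,1)::nat\<times>nat}.
      monom (if snd x = 0 then 1 else if snd x = 1 then -1 else 0) (n - snd x))"
      unfolding eq
      apply (rule sum.mono_neutral_right[OF finite_P sub])
      using F0 F1 by (auto simp: mem_P)
    then show ?thesis by (simp add: minus_monom[symmetric])
  qed
  show ?thesis using A B by blast
qed

end
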